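(* Let $k\ge2$ be an integer, $g(z)=z^3-z^2+7z+1$, and $\Gamma_k(t)=\Psi_k(g(t))$. Let $A=\{z\in\mathbb{C}:\Re z\le0,\ |g(z)|=1\}$ and $B=\{z\in\mathbb{C}:\Re z>0,\ |g(z)|=1\}$. Then $\Gamma_k$ has exactly $\varphi(k)$ roots in $A$ and exactly $2\varphi(k)$ roots in $B$.
   Context: $\Psi_k$ is the $k$-th cyclotomic polynomial and $\varphi$ is Euler's totient function. *)

theory Defs
  imports "HOL-Analysis.Analysis" "HOL-Number_Theory.Number_Theory"
begin

definition cyclotomic_poly :: "nat \<Rightarrow> complex poly" where
  "cyclotomic_poly k =
     (\<Prod>j\<in>{j\<in>{1..k}. coprime j k}. [:- cis (2 * pi * real j / real k), 1:])"

definition g_poly :: "complex poly" where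
  "g_poly = [:1, 7, -1, 1:]"

definition Gamma_poly :: "nat \<Rightarrow> complex poly" where
  "Gamma_poly k = pcompose (cyclotomic_poly k) g_poly"

end

theory Submission imports Defs "HOL-Computational_Algebra.Fundamental_Theorem_Algebra" begin

lemma annulus:
  fixes z :: complex
  assumes "cmod (z^3 - z^2 + 7*z + 1) = 1"
  shows "cmod z \<le> 1/2 \<or> cmod z \<ge> 2"
proof (rule ccontr)
  assume "\<not> ?thesis"
  then have r: "1/2 < cmod z" "cmod z < 2" by auto
  define r where "r = cmod z"
  have "cmod (7*z+1) \<ge> 7*r - 1"
    using norm_triangle_ineq4[of "7*z+1" 1] by (simp add: r_def norm_mult)
  moreover have "cmod (z^3 - z^2) \<le> r^3 + r^2"
    using norm_triangle_ineq4[of "z^3" "z^2"] by (simp add: r_def norm_power)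
  moreover have "cmod (7*z+1) \<le> cmod (z^3 - z^2 + 7*z + 1) + cmod (z^3 - z^2)"
    using norm_triangle_ineq4[of "z^3 - z^2 + 7*z + 1" "z^3 - z^2"] by simp
  ultimately have "7*r - 1 \<le> 1 + r^3 + r^2" using assms by linarith
  moreover have "(r - 2) * (r^2 + 3*r - 1) < 0"
  proof (rule mult_neg_pos)
    show "r - 2 < 0" using r r_def by simp
    have "r^2 \<ge> 0" by simp
    then show "r^2 + 3*r - 1 > 0" using r r_def by linarith
  qed
  ultimately show False by (simp add: algebra_simps power2_eq_square power3_eq_cube)
qed

lemma small_left:
  fixes z :: complex
  assumes "cmod (z^3 - z^2 + 7*z + 1) = 1" "cmod z \<le> 1/2"
  shows "Re z \<le> 0"
proof (rule ccontr)
  assume "\<not> ?thesis"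
  then have xp: "Re z > 0" by simp
  define w where "w = z^3 - z^2 + 7*z"
  define x where "x = Re z"
  define y where "y = Im z"
  have "(cmod (1 + w))^2 = 1" using assms(1) by (simp add: w_def add.commute add.left_commute)
  then have "(1 + Re w)^2 + (Im w)^2 = 1" by (simp add: cmod_power2)
  then have "2 * Re w + ((Re w)^2 + (Im w)^2) = 0" by (simp add: power2_eq_square algebra_simps)
  moreover have "(Re w)^2 + (Im w)^2 \<ge> 0" by simp
  ultimately have rw: "Re w \<le> 0" by linarith
  have rew: "Re w = x^3 - 3*x*y^2 - x^2 + y^2 + 7*x"
    by (simp add: w_def x_def y_def power2_eq_square power3_eq_cube algebra_simps)
  have "x^2 + y^2 \<le> 1/4"
  proof -
    have "(cmod z)^2 \<le> (1/2)^2" using assms(2) by (intro power_mono) auto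
    also have "(1/2::real)^2 = 1/4" by (simp add: power2_eq_square)
    finally show ?thesis unfolding cmod_power2 x_def y_def .
  qed
  moreover have "x^2 \<ge> 0" "y^2 \<ge> 0" by auto
  ultimately have "x^2 \<le> 1/4" "y^2 \<le> 1/4" by linarith+
  moreover have "(1/2::real)^2 = 1/4" by (simp add: power2_eq_square)
  ultimately have "x^2 \<le> (1/2)^2" "y^2 \<le> 1/4" by simp_all
  then have "\<bar>x\<bar> \<le> \<bar>1/2\<bar>" using abs_le_square_iff by blast
  then have "x \<le> 1/2" by simp
  have x0: "x > 0" using xp x_def by simp
  have "x^2 \<le> x/2" using x0 \<open>x \<le> 1/2\<close> by (simp add: power2_eq_square)
  moreover have "x*y^2 \<le> x/4" using x0 \<open>y^2 \<le> 1/4\<close> by (simp add: mult_left_mono)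
  moreover have "x^3 > 0" "y^2 \<ge> 0" using x0 by auto
  ultimately have "Re w > 0" using rew x0 by linarith
  with rw show False by simp
qed

lemma left_bounded:
  fixes z :: complex
  assumes "cmod (z^3 - z^2 + 7*z + 1) = 1" "Re z \<le> 0"
  shows "cmod z < 2"
proof (rule ccontr)
  assume "\<not> ?thesis"
  then have z2: "cmod z \<ge> 2" by simp
  define q where "q = z^2 - z + 7"
  have "z^3 - z^2 + 7*z + 1 - 1 = z * q" by (simp add: q_def algebra_simps power2_eq_square power3_eq_cube)
  then have "cmod (z*q) \<le> 2"
    using norm_triangle_ineq4[of "z^3 - z^2 + 7*z + 1" 1] assms(1) by simp
  then have "cmod z * cmod q \<le> 2" by (simp add: norm_mult)
  then have "2 * cmod q \<le> 2" using z2 by (meson mult_right_mono norm_ge_zero order_trans)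
  then have cq: "cmod q \<le> 1" by simp
  define x where "x = Re z"
  define y where "y = Im z"
  have imq: "Im q = y * (2*x - 1)" by (simp add: q_def x_def y_def power2_eq_square algebra_simps)
  have req: "Re q = x^2 - y^2 - x + 7" by (simp add: q_def x_def y_def power2_eq_square algebra_simps)
  have "\<bar>Im q\<bar> \<le> 1" "\<bar>Re q\<bar> \<le> 1" using cq abs_Im_le_cmod abs_Re_le_cmod order_trans by blast+
  have x0: "x \<le> 0" using assms(2) x_def by simp
  have "\<bar>y\<bar> \<le> \<bar>y\<bar> * (1 - 2*x)" using x0 by (simp add: mult_left_mono[of 1 "1-2*x" "\<bar>y\<bar>", simplified])
  also have "\<dots> = \<bar>Im q\<bar>" using imq x0 by (simp add: abs_mult)
  finally have "\<bar>y\<bar> \<le> 1" using \<open>\<bar>Im q\<bar> \<le> 1\<close> by linarith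
  then have "y^2 \<le> 1" using abs_le_square_iff[of y 1] by simp
  moreover have "x^2 - x \<ge> 0" using x0 by (simp add: power2_eq_square) (smt (verit) mult_nonpos_nonpos)
  ultimately have "Re q \<ge> 6" using req by linarith
  with \<open>\<bar>Re q\<bar> \<le> 1\<close> show False by linarith
qed

lemma classify:
  fixes z :: complex
  assumes "cmod (z^3 - z^2 + 7*z + 1) = 1"
  shows "(cmod z \<le> 1/2 \<and> Re z \<le> 0) \<or> (cmod z \<ge> 2 \<and> Re z > 0)"
proof (cases "cmod z \<le> 1/2")
  case True
  then show ?thesis using small_left[OF assms] by blast
next
  case False
  then have "cmod z \<ge> 2" using annulus[OF assms] by blast
  moreover have "Re z > 0"
  proof (rule ccontr)
    assume "\<not> Re z > 0"
    then have "cmod z < 2" using left_bounded[OF assms] by simp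
    with \<open>cmod z \<ge> 2\<close> show False by simp
  qed
  ultimately show ?thesis by blast
qed

lemma two_small:
  fixes a b c :: complex
  assumes "a + b + c = 1" "a*b + b*c + c*a = 7" "cmod a \<le> 1/2" "cmod b \<le> 1/2"
  shows False
proof -
  have c: "c = 1 - a - b" using assms(1) by (simp add: algebra_simps)
  have "cmod c \<le> cmod (1 - a) + cmod b" unfolding c by (rule norm_triangle_ineq4)
  also have "cmod (1 - a) \<le> cmod (1::complex) + cmod a" by (rule norm_triangle_ineq4)
  finally have "cmod c \<le> cmod (1::complex) + cmod a + cmod b" by simp
  then have cc: "cmod c \<le> 2" using assms by simp
  have "cmod (a*b) \<le> 1/4"
  proof -
    have "cmod (a*b) = cmod a * cmod b" by (simp add: norm_mult)
    also have "\<dots> \<le> 1/2 * (1/2)" using assms by (intro mult_mono) auto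
    finally show ?thesis by simp
  qed
  moreover have "cmod (c*(a+b)) \<le> 2"
  proof -
    have "cmod (a+b) \<le> 1" using norm_triangle_ineq[of a b] assms by simp
    then have "cmod c * cmod (a+b) \<le> 2 * 1" using cc by (intro mult_mono) auto
    then show ?thesis by (simp add: norm_mult)
  qed
  moreover have "a*b + c*(a+b) = 7" using assms(2) by (simp add: algebra_simps)
  moreover have "cmod (a*b + c*(a+b)) \<le> cmod (a*b) + cmod (c*(a+b))" by (rule norm_triangle_ineq)
  ultimately show False by simp
qed

lemma three_large:
  fixes a b c :: complex
  assumes "a*b*c = \<zeta> - 1" "cmod \<zeta> = 1" "cmod a \<ge> 2" "cmod b \<ge> 2" "cmod c \<ge> 2"
  shows False
proof -
  have "cmod a * cmod b \<ge> 2 * 2" using assms by (intro mult_mono) auto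
  then have "cmod a * cmod b * cmod c \<ge> 4 * 2" using assms by (intro mult_mono) auto
  then have "cmod (a*b*c) \<ge> 8" by (simp add: norm_mult)
  moreover have "cmod (\<zeta> - 1) \<le> 2" using norm_triangle_ineq4[of \<zeta> 1] assms by simp
  ultimately show False using assms(1) by simp
qed

lemma double:
  fixes a b :: complex
  assumes "a + b + b = 1" "a*b + b*b + b*a = 7" "cmod a \<le> 1/2"
  shows False
proof -
  have e: "2*b = 1 - a" using assms(1) by (simp add: algebra_simps)
  have "28 = 4*(a*b + b*b + b*a)" using assms(2) by simp
  also have "\<dots> = (2*b)^2 + 4*a*(2*b)" by (simp add: algebra_simps power2_eq_square)
  also have "\<dots> = (1-a)^2 + 4*a*(1-a)" by (simp only: e)
  finally have "27 = -(3*a^2 - 2*a)" by (simp add: algebra_simps power2_eq_square)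
  then have "27 = cmod (3*a^2 - 2*a)" by (metis norm_minus_cancel norm_numeral)
  also have "\<dots> \<le> cmod (3*a^2) + cmod (2*a)" by (rule norm_triangle_ineq4)
  also have "\<dots> = 3 * (cmod a)^2 + 2 * cmod a" by (simp add: norm_mult norm_power)
  also have "\<dots> \<le> 3 * (1/2)^2 + 2 * (1/2)" using assms(3)
    by (intro add_mono mult_left_mono power_mono) auto
  finally show False by (simp add: power2_eq_square)
qed

lemma one_small_count:
  fixes a b c :: complex
  assumes "Re a \<le> 0" "Re b > 0" "Re c > 0" "b \<noteq> c"
  shows "card {z \<in> {a,b,c}. Re z \<le> 0} = 1 \<and> card {z \<in> {a,b,c}. Re z > 0} = 2"
proof -
  have "{z \<in> {a,b,c}. Re z \<le> 0} = {a}" using assms by auto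
  moreover have "{z \<in> {a,b,c}. Re z > 0} = {b,c}" using assms by auto
  ultimately show ?thesis using assms(4) by simp
qed

lemma count3:
  fixes a b c \<zeta> :: complex
  assumes v1: "a + b + c = 1" and v2: "a*b + b*c + c*a = 7" and v3: "a*b*c = \<zeta> - 1"
    and z1: "cmod \<zeta> = 1"
    and ca: "(cmod a \<le> 1/2 \<and> Re a \<le> 0) \<or> (cmod a \<ge> 2 \<and> Re a > 0)"
    and cb: "(cmod b \<le> 1/2 \<and> Re b \<le> 0) \<or> (cmod b \<ge> 2 \<and> Re b > 0)"
    and cc: "(cmod c \<le> 1/2 \<and> Re c \<le> 0) \<or> (cmod c \<ge> 2 \<and> Re c > 0)"
  shows "card {z \<in> {a,b,c}. Re z \<le> 0} = 1 \<and> card {z \<in> {a,b,c}. Re z > 0} = 2"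
proof -
  have n3: "\<not> (cmod a \<ge> 2 \<and> cmod b \<ge> 2 \<and> cmod c \<ge> 2)" using three_large[OF v3 z1] by blast
  have nab: "\<not> (cmod a \<le> 1/2 \<and> cmod b \<le> 1/2)" using two_small[OF v1 v2] by blast
  have nbc: "\<not> (cmod b \<le> 1/2 \<and> cmod c \<le> 1/2)"
  proof -
    have "b + c + a = 1" "b*c + c*a + a*b = 7" using v1 v2 by (simp_all add: ac_simps)
    then show ?thesis using two_small[of b c a] by blast
  qed
  have nac: "\<not> (cmod a \<le> 1/2 \<and> cmod c \<le> 1/2)"
  proof -
    have "a + c + b = 1" "a*c + c*b + b*a = 7" using v1 v2 by (simp_all add: ac_simps)
    then show ?thesis using two_small[of a c b] by blast
  qed
  consider "cmod a \<le> 1/2 \<and> Re a \<le> 0" "cmod b \<ge> 2 \<and> Re b > 0" "cmod c \<ge> 2 \<and> Re c > 0"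
    | "cmod b \<le> 1/2 \<and> Re b \<le> 0" "cmod a \<ge> 2 \<and> Re a > 0" "cmod c \<ge> 2 \<and> Re c > 0"
    | "cmod c \<le> 1/2 \<and> Re c \<le> 0" "cmod a \<ge> 2 \<and> Re a > 0" "cmod b \<ge> 2 \<and> Re b > 0"
    using ca cb cc n3 nab nbc nac by blast
  then show ?thesis
  proof cases
    case 1
    have "b \<noteq> c"
    proof
      assume "b = c"
      then show False using double[of a b] v1 v2 1 by simp
    qed
    then show ?thesis using one_small_count[of a b c] 1 by simp
  next
    case 2
    have "a \<noteq> c"
    proof
      assume "a = c"
      then have "b + a + a = 1" "b*a + a*a + a*b = 7" using v1 v2 by (simp_all add: ac_simps)
      then show False using double[of b a] 2 by simp
    qed
    then have "card {z \<in> {b,a,c}. Re z \<le> 0} = 1 \<and> card {z \<in> {b,a,c}. Re z > 0} = 2"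
      using one_small_count[of b a c] 2 by simp
    moreover have "{b,a,c} = {a,b,c}" by auto
    ultimately show ?thesis by simp
  next
    case 3
    have "a \<noteq> b"
    proof
      assume "a = b"
      then have "c + a + a = 1" "c*a + a*a + a*c = 7" using v1 v2 by (simp_all add: ac_simps)
      then show False using double[of c a] 3 by simp
    qed
    then have "card {z \<in> {c,a,b}. Re z \<le> 0} = 1 \<and> card {z \<in> {c,a,b}. Re z > 0} = 2"
      using one_small_count[of c a b] 3 by simp
    moreover have "{c,a,b} = {a,b,c}" by auto
    ultimately show ?thesis by simp
  qed
qed

lemma fiber:
  fixes \<zeta> :: complex
  assumes z1: "cmod \<zeta> = 1"
  shows "card {z. Re z \<le> 0 \<and> z^3 - z^2 + 7*z + 1 = \<zeta>} = 1
       \<and> card {z. Re z > 0 \<and> z^3 - z^2 + 7*z + 1 = \<zeta>} = 2"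
proof -
  obtain a where a0: "poly [:1-\<zeta>, 7, -1, 1:] a = 0"
    using fundamental_theorem_of_algebra_alt[of "[:1-\<zeta>, 7, -1, 1:]"] by auto
  have ga: "a^3 - a^2 + 7*a + 1 = \<zeta>"
  proof -
    have "poly [:1-\<zeta>, 7, -1, 1:] a = a^3 - a^2 + 7*a + 1 - \<zeta>"
      by (simp add: algebra_simps power2_eq_square power3_eq_cube)
    then have "a^3 - a^2 + 7*a + 1 - \<zeta> = 0" using a0 by argo
    then show ?thesis by (simp only: right_minus_eq)
  qed
  define D where "D = (1-a)^2 - 4*(a^2 - a + 7)"
  define s where "s = csqrt D"
  have s2: "s^2 = D" by (simp add: s_def)
  define b where "b = ((1-a)+s)/2"
  define c where "c = ((1-a)-s)/2"
  have v1: "a + b + c = 1" by (simp add: b_def c_def field_simps)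
  have bc0: "b*c = ((1-a)^2 - s^2)/4" by (simp add: b_def c_def field_simps power2_eq_square)
  have bc: "b*c = a^2 - a + 7" unfolding bc0 s2 D_def by (simp add: field_simps power2_eq_square)
  have bpc: "b + c = 1 - a" using v1 by (simp add: algebra_simps)
  have v2: "a*b + b*c + c*a = 7"
  proof -
    have "a*b + b*c + c*a = a*(b+c) + b*c" by (simp add: algebra_simps)
    also have "\<dots> = 7" unfolding bpc bc by (simp add: algebra_simps power2_eq_square)
    finally show ?thesis .
  qed
  have v3: "a*b*c = \<zeta> - 1"
  proof -
    have "a*b*c = a*(b*c)" by (simp add: algebra_simps)
    also have "\<dots> = a^3 - a^2 + 7*a" unfolding bc by (simp add: algebra_simps power2_eq_square power3_eq_cube)
    also have "\<dots> = \<zeta> - 1" by (simp add: ga[symmetric])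
    finally show ?thesis .
  qed
  have roots: "(z^3 - z^2 + 7*z + 1 = \<zeta>) \<longleftrightarrow> z \<in> {a,b,c}" for z
  proof -
    have "(z-a)*(z-b)*(z-c) = z^3 - (a+b+c)*z^2 + (a*b+b*c+c*a)*z - a*b*c"
      by (simp add: algebra_simps power2_eq_square power3_eq_cube)
    also have "\<dots> = z^3 - z^2 + 7*z + 1 - \<zeta>" unfolding v1 v2 v3 by simp
    finally have e: "z^3 - z^2 + 7*z + 1 - \<zeta> = (z-a)*(z-b)*(z-c)" by simp
    have "(z^3 - z^2 + 7*z + 1 = \<zeta>) \<longleftrightarrow> z^3 - z^2 + 7*z + 1 - \<zeta> = 0" by simp
    also have "\<dots> \<longleftrightarrow> z \<in> {a,b,c}" unfolding e by auto
    finally show ?thesis .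
  qed
  have cls: "(cmod z \<le> 1/2 \<and> Re z \<le> 0) \<or> (cmod z \<ge> 2 \<and> Re z > 0)" if "z \<in> {a,b,c}" for z
  proof -
    have "z^3 - z^2 + 7*z + 1 = \<zeta>" using roots that by blast
    then show ?thesis using classify z1 by simp
  qed
  have e1: "{z. Re z \<le> 0 \<and> z^3 - z^2 + 7*z + 1 = \<zeta>} = {z \<in> {a,b,c}. Re z \<le> 0}"
    using roots by blast
  have e2: "{z. Re z > 0 \<and> z^3 - z^2 + 7*z + 1 = \<zeta>} = {z \<in> {a,b,c}. Re z > 0}"
    using roots by blast
  show ?thesis unfolding e1 e2
    by (rule count3[OF v1 v2 v3 z1]) (rule cls; simp)+
qed

lemma poly_g: "poly g_poly z = z^3 - z^2 + 7*z + 1"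
  by (simp add: g_poly_def algebra_simps power3_eq_cube power2_eq_square)

theorem proposition3p8:
  fixes k :: nat
  assumes "k \<ge> 2"
  defines "A \<equiv> {z::complex. Re z \<le> 0 \<and> cmod (poly g_poly z) = 1}"
      and "B \<equiv> {z::complex. Re z > 0 \<and> cmod (poly g_poly z) = 1}"
  shows "card {z \<in> A. poly (Gamma_poly k) z = 0} = totient k
       \<and> card {z \<in> B. poly (Gamma_poly k) z = 0} = 2 * totient k"
proof -
  define S where "S = {j\<in>{1..k}. coprime j k}"
  define \<zeta> where "\<zeta> j = cis (2 * pi * real j / real k)" for j :: nat
  define G where "G z = z^3 - z^2 + 7*z + 1" for z :: complex
  have finS: "finite S" by (simp add: S_def)
  have tot: "totient k = card S"
  proof -
    have "totatives k = S" by (auto simp: S_def totatives_def)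
    then show ?thesis by (simp add: totient_def)
  qed
  have Slt: "S \<subseteq> {..<k}"
  proof
    fix j assume "j \<in> S"
    then have "j \<le> k" "coprime j k" by (auto simp: S_def)
    moreover have "j \<noteq> k"
    proof
      assume "j = k"
      with \<open>coprime j k\<close> have "k = 1" by simp
      with assms(1) show False by simp
    qed
    ultimately show "j \<in> {..<k}" by simp
  qed
  have inj: "inj_on \<zeta> S"
  proof -
    have k0: "k > 0" using assms(1) by simp
    have "bij_betw (\<lambda>j. cis (2 * pi * real j / real k)) {..<k} {z. z ^ k = 1}"
      by (rule Complex.bij_betw_roots_unity[OF k0])
    then have "inj_on (\<lambda>j. cis (2 * pi * real j / real k)) {..<k}"
      unfolding bij_betw_def by (rule conjunct1)
    moreover have "\<zeta> = (\<lambda>j. cis (2 * pi * real j / real k))" by (simp add: fun_eq_iff \<zeta>_def)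
    ultimately have "inj_on \<zeta> {..<k}" by simp
    then show ?thesis using Slt inj_on_subset by blast
  qed
  have nz: "cmod (\<zeta> j) = 1" for j by (simp add: \<zeta>_def)
  have pG: "poly (Gamma_poly k) z = (\<Prod>j\<in>S. G z - \<zeta> j)" for z
    by (simp add: Gamma_poly_def cyclotomic_poly_def poly_pcompose poly_prod poly_g G_def S_def \<zeta>_def)
  have pG0: "poly (Gamma_poly k) z = 0 \<longleftrightarrow> (\<exists>j\<in>S. G z = \<zeta> j)" for z
    unfolding pG using finS by (simp add: prod_zero_iff)
  have setA: "{z \<in> A. poly (Gamma_poly k) z = 0} = (\<Union>j\<in>S. {z. Re z \<le> 0 \<and> G z = \<zeta> j})"
    unfolding A_def pG0 using nz by (auto simp: poly_g G_def[symmetric])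
  have setB: "{z \<in> B. poly (Gamma_poly k) z = 0} = (\<Union>j\<in>S. {z. Re z > 0 \<and> G z = \<zeta> j})"
    unfolding B_def pG0 using nz by (auto simp: poly_g G_def[symmetric])
  have fibA: "card {z. Re z \<le> 0 \<and> G z = \<zeta> j} = 1" for j
    using fiber[OF nz[of j]] by (simp add: G_def)
  have fibB: "card {z. Re z > 0 \<and> G z = \<zeta> j} = 2" for j
    using fiber[OF nz[of j]] by (simp add: G_def)
  have "card {z \<in> A. poly (Gamma_poly k) z = 0} = (\<Sum>j\<in>S. card {z. Re z \<le> 0 \<and> G z = \<zeta> j})"
    unfolding setA
  proof (rule card_UN_disjoint[OF finS])
    show "\<forall>j\<in>S. finite {z. Re z \<le> 0 \<and> G z = \<zeta> j}"
      using fibA card_ge_0_finite by (metis zero_less_one)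
    show "\<forall>i\<in>S. \<forall>j\<in>S. i \<noteq> j \<longrightarrow> {z. Re z \<le> 0 \<and> G z = \<zeta> i} \<inter> {z. Re z \<le> 0 \<and> G z = \<zeta> j} = {}"
      using inj by (auto simp: inj_on_def)
  qed
  also have "\<dots> = totient k" using fibA tot by simp
  finally have cA: "card {z \<in> A. poly (Gamma_poly k) z = 0} = totient k" .
  have "card {z \<in> B. poly (Gamma_poly k) z = 0} = (\<Sum>j\<in>S. card {z. Re z > 0 \<and> G z = \<zeta> j})"
    unfolding setB
  proof (rule card_UN_disjoint[OF finS])
    show "\<forall>j\<in>S. finite {z. Re z > 0 \<and> G z = \<zeta> j}"
      using fibB card_ge_0_finite by (metis zero_less_numeral)
    show "\<forall>i\<in>S. \<forall>j\<in>S. i \<noteq> j \<longrightarrow> {z. Re z > 0 \<and> G z = \<zeta> i} \<inter> {z. Re z > 0 \<and> G z = \<zeta> j} = {}"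
      using inj by (auto simp: inj_on_def)
  qed
  also have "\<dots> = 2 * totient k" using fibB tot by simp
  finally show ?thesis using cA by simp
qed

end
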